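(* There exists a constant $C>0$, independent of $n$, such that for all sufficiently large $n$, \[ \zeta_n< C+\frac{\min\{1-\beta,\alpha\}}{\lambda_1}\log n . \]
   Context: Fix constants $r_0,d_0\ge 0$ with $\lambda_0:=r_0-d_0<0$, $d_1>0$, $k>1$, $\alpha\in(0,1)$, $\beta\in(0,1)$. Let $f:[0,\infty)^2\to[0,\infty)$ satisfy: (A1) $f$ is Lipschitz continuous; (A2) $f(x,y)=r_1$ when $x+y=0$ and $f(x,y)=d_1$ when $x+y=1$, where $r_1:=f(0,0)>d_1$; (A3) $f(x,y)=\Phi(x+y)$ for some non-increasing function $\Phi:[0,\infty)\to[0,\infty)$; (A4) $f(x,y)\to0$ as $x\to\infty$ and as $y\to\infty$; (A5) $f(x,y)\ge \lambda_1(1-(x+y))+d_1$ for all $x,y\ge0$, where $\lambda_1:=r_1-d_1>0$. Put $\phi(x,y):=f(x,y)-d_1$. For each integer $n\ge1$ let $K=K(n):=kn$ and let $(y_0,y_1,y_\beta)$ solve \[ \dot y_0=\lambda_0 y_0,\qquad \dot y_1=\phi(y_0,y_1)\,y_1+n^{-\alpha}y_0,\qquad \dot y_\beta=\phi(y_0,y_1)\,y_\beta, \] with $(y_0(0),y_1(0),y_\beta(0))=(n/K,\,n^\beta/K,\,n^\beta/K)$. Define the deterministic recurrence time $\zeta_n:=\inf\{t>0: y_1(t)=n/K\}$. *)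

theory Defs
  imports "HOL-Analysis.Analysis"
begin

definition recurrence_time :: "(real \<Rightarrow> real) \<Rightarrow> real \<Rightarrow> real" where
  "recurrence_time y c = Inf {t. t > 0 \<and> y t = c}"

end

theory Submission
  imports Defs
begin

lemma at_pos: "0 < (t::real) \<Longrightarrow> at t within {0..} = at t"
  by (rule at_within_interior) simp

lemma cont_helper:
  fixes g g' :: "real \<Rightarrow> real"
  assumes "\<And>t. a \<le> t \<Longrightarrow> t \<le> b \<Longrightarrow> (g has_real_derivative g' t) (at t within {0..})"
    and "0 \<le> a"
  shows "continuous_on {a..b} g"
proof -
  have "\<And>t. t \<in> {a..b} \<Longrightarrow> continuous (at t within {a..b}) g"
  proof -
    fix t assume t: "t \<in> {a..b}"
    have "(g has_real_derivative g' t) (at t within {a..b})"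
      using assms(1)[of t] t assms(2) by (auto intro: DERIV_subset)
    thus "continuous (at t within {a..b}) g" by (rule DERIV_continuous)
  qed
  thus ?thesis by (simp add: continuous_on_eq_continuous_within)
qed

lemma mono_helper:
  fixes g g' :: "real \<Rightarrow> real"
  assumes "0 \<le> a" "a \<le> b"
    "\<And>t. a \<le> t \<Longrightarrow> t \<le> b \<Longrightarrow> (g has_real_derivative g' t) (at t within {0..})"
    "\<And>t. a < t \<Longrightarrow> t < b \<Longrightarrow> 0 \<le> g' t"
  shows "g a \<le> g b"
proof (rule DERIV_nonneg_imp_increasing_open[OF assms(2)])
  show "continuous_on {a..b} g" using cont_helper[OF assms(3) assms(1)] by blast
  fix x assume x: "a < x" "x < b"
  have "(g has_real_derivative g' x) (at x)"
    using assms(3)[of x] x assms(1) at_pos[of x] by auto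
  thus "\<exists>y. (g has_real_derivative y) (at x) \<and> 0 \<le> y" using assms(4) x by blast
qed

lemma pos_lemma:
  fixes u p q :: "real \<Rightarrow> real"
  assumes der: "\<And>t. t \<ge> 0 \<Longrightarrow> (u has_real_derivative p t * u t + q t) (at t within {0..})"
    and q: "\<And>t. t \<ge> 0 \<Longrightarrow> q t > 0" and u0: "u 0 > 0"
  shows "\<And>t. t \<ge> 0 \<Longrightarrow> u t > 0"
proof (rule ccontr)
  fix t1 :: real assume t1: "t1 \<ge> 0" "\<not> u t1 > 0"
  define S where "S = {0..t1} \<inter> u -` {..0}"
  have cont: "continuous_on {0..t1} u" by (rule cont_helper[OF der]) auto
  have cl: "closed S" unfolding S_def by (rule continuous_closed_preimage[OF cont]) auto
  have ne: "S \<noteq> {}" using t1 unfolding S_def by auto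
  have bb: "bdd_below S" unfolding S_def by (rule bdd_belowI[of _ 0]) auto
  define m where "m = Inf S"
  have mS: "m \<in> S" unfolding m_def by (rule closed_contains_Inf[OF ne bb cl])
  have lower: "\<And>x. x \<in> S \<Longrightarrow> m \<le> x" unfolding m_def using bb by (simp add: cInf_lower)
  have m0: "0 \<le> m" "m \<le> t1" "u m \<le> 0" using mS unfolding S_def by auto
  have cm: "continuous_on {0..m} u" by (rule cont_helper[OF der]) auto
  obtain z where z: "0 \<le> z" "z \<le> m" "u z = 0"
    using IVT2'[of u m 0 0, OF m0(3) _ m0(1) cm] u0 by auto
  have "z \<in> S" using z m0 unfolding S_def by auto
  hence "m \<le> z" by (rule lower)
  hence um: "u m = 0" using z by auto
  have mpos: "m > 0" using um u0 m0 by (cases "m = 0") auto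
  have "(u has_real_derivative p m * u m + q m) (at m within {0..})" using der m0 by auto
  moreover have "p m * u m + q m > 0" using um q[of m] m0 by simp
  ultimately obtain d where d: "d > 0" "\<And>h. h > 0 \<Longrightarrow> m - h \<in> {0..} \<Longrightarrow> h < d \<Longrightarrow> u (m - h) < u m"
    using has_real_derivative_pos_inc_left by blast
  define h where "h = min (d/2) (m/2)"
  have h: "h > 0" "h < d" "m - h \<ge> 0" using d mpos unfolding h_def by auto
  have "u (m - h) < 0" using d(2)[OF h(1) _ h(2)] h um by auto
  hence "m - h \<in> S" using h m0 unfolding S_def by auto
  hence "m \<le> m - h" by (rule lower)
  thus False using h by auto
qed

lemma y0_explicit:
  fixes y :: "real \<Rightarrow> real"
  assumes der: "\<And>t. t \<ge> 0 \<Longrightarrow> (y has_real_derivative l * y t) (at t within {0..})"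
  shows "\<And>t. t \<ge> 0 \<Longrightarrow> y t = y 0 * exp (l * t)"
proof -
  fix t :: real assume t: "t \<ge> 0"
  define g where "g = (\<lambda>s. y s * exp (- l * s))"
  have dg: "\<And>s. s \<ge> 0 \<Longrightarrow> (g has_real_derivative 0) (at s within {0..})"
  proof -
    fix s :: real assume s: "s \<ge> 0"
    have "(g has_real_derivative (l * y s) * exp (- l * s) + y s * (exp (- l * s) * (- l))) (at s within {0..})"
      unfolding g_def by (intro derivative_eq_intros) (auto intro: der[OF s])
    thus "(g has_real_derivative 0) (at s within {0..})" by (simp add: algebra_simps)
  qed
  have "g 0 \<le> g t" by (rule mono_helper[OF _ t dg]) auto
  moreover have "- g 0 \<le> - g t"
    by (rule mono_helper[of 0 t "\<lambda>s. - g s" "\<lambda>s. 0"]) (auto intro!: derivative_eq_intros dg simp: t)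
  ultimately have "g t = g 0" by simp
  hence "y t * exp (- l * t) = y 0" unfolding g_def by simp
  hence "y t = y 0 * exp (l * t)" by (simp add: exp_minus field_simps)
  thus "y t = y 0 * exp (l * t)" .
qed

lemma core:
  fixes u y p :: "real \<Rightarrow> real" and l0 l1 k c u0 T :: real
  assumes l0: "l0 < 0" and l1: "l1 > 0" and k: "k > 1" and c: "c > 0"
    and u0pos: "0 < u0" and u0lt: "u0 < 1/k"
    and y: "\<And>t. t \<ge> 0 \<Longrightarrow> y t = exp (l0 * t) / k"
    and ui: "u 0 = u0"
    and der: "\<And>t. t \<ge> 0 \<Longrightarrow> (u has_real_derivative p t * u t + c * y t) (at t within {0..})"
    and pl: "\<And>t. t \<ge> 0 \<Longrightarrow> u t \<ge> 0 \<Longrightarrow> p t \<ge> l1 * (1 - (y t + u t))"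
    and T: "T \<ge> 0"
    and cond: "l1 * T > - ln (k - 1) - ln u0 + l1 / ((k - 1) * (- l0))
      \<or> (T \<ge> 1 \<and> l1 * T > - ln (k - 1) - ln (c * (exp l0 * (1 - exp (- l1)) / (k * l1))) + l1
              + l1 / ((k - 1) * (- l0)))"
  shows "\<exists>t. 0 < t \<and> t \<le> T \<and> u t = 1/k"
proof (rule ccontr)
  assume nex: "\<not> (\<exists>t. 0 < t \<and> t \<le> T \<and> u t = 1/k)"
  define B where "B = l1 / ((k - 1) * (- l0))"
  define D where "D = exp l0 * (1 - exp (- l1)) / (k * l1)"
  have Bpos: "B > 0" unfolding B_def using l0 l1 k by (intro divide_pos_pos) (auto simp: mult_pos_neg)
  have ypos: "\<And>t. t \<ge> 0 \<Longrightarrow> y t > 0" using y k by simp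
  have pos: "\<And>t. t \<ge> 0 \<Longrightarrow> u t > 0"
    by (rule pos_lemma[of u p "\<lambda>t. c * y t"]) (auto simp: der c ypos ui u0pos)
  have lt: "u t < 1/k" if t: "0 \<le> t" "t \<le> T" for t
  proof (rule ccontr)
    assume "\<not> u t < 1/k"
    hence ge: "1/k \<le> u t" by simp
    have cm: "continuous_on {0..t} u" by (rule cont_helper[OF der]) (use t in auto)
    obtain x where x: "0 \<le> x" "x \<le> t" "u x = 1/k"
      using IVT'[of u 0 "1/k" t, OF _ ge t(1) cm] ui u0lt by auto
    have "x \<noteq> 0" using x ui u0lt by auto
    thus False using nex x t by auto
  qed
  have ylt: "y t \<le> 1/k" if "t \<ge> 0" for t
  proof -
    have "exp (l0 * t) \<le> 1" using l0 that by (simp add: mult_nonpos_nonneg)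
    thus ?thesis using y[OF that] k by (simp add: divide_right_mono)
  qed
  define up where "up = (\<lambda>t. p t * u t + c * y t)"
  define G where "G = (\<lambda>v::real. ln v - ln (1 - v))"
  define H where "H = (\<lambda>t. G (u t) - l1 * t - B * exp (l0 * t))"
  have Hmono: "H s \<le> H T" if s: "0 \<le> s" "s \<le> T" for s
  proof (rule mono_helper[OF s(1) s(2), of H "\<lambda>t. up t / u t - (- up t) / (1 - u t) - l1 - B * (exp (l0 * t) * l0)"])
    fix t assume t: "s \<le> t" "t \<le> T"
    have ut: "0 < u t" "u t < 1/k" using pos lt t s by auto
    hence ut1: "u t < 1" using k by (smt (verit) divide_less_eq_1_pos)
    show "(H has_real_derivative up t / u t - (- up t) / (1 - u t) - l1 - B * (exp (l0 * t) * l0)) (at t within {0..})"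
      unfolding H_def G_def up_def
      by (rule derivative_eq_intros refl der | use t s ut ut1 in auto)+
  next
    fix t assume t: "s < t" "t < T"
    have ut: "0 < u t" "u t < 1/k" using pos lt t s by auto
    have t0: "t \<ge> 0" using t s by auto
    have ut1: "u t < 1" using ut k by (smt (verit) divide_less_eq_1_pos)
    define w where "w = u t"
    define P where "P = p t"
    define Y where "Y = y t"
    have w: "0 < w" "k * w < 1" using ut k unfolding w_def by (auto simp: field_simps)
    have Y: "Y > 0" "Y = exp (l0 * t) / k" using ypos y t0 unfolding Y_def by auto
    have PP: "P \<ge> l1 * (1 - (Y + w))" using pl[OF t0] ut unfolding P_def Y_def w_def by auto
    have "c * Y \<ge> 0" using c Y(1) by simp
    have eq: "up t / u t - (- up t) / (1 - u t) = (P * w + c * Y) / (w * (1 - w))"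
      unfolding up_def P_def Y_def w_def using ut ut1 by (simp add: field_simps)
    have "(P * w + c * Y) / (w * (1 - w)) \<ge> (P * w) / (w * (1 - w))"
      using w ut1 \<open>c * Y \<ge> 0\<close> unfolding w_def by (intro divide_right_mono) auto
    also have "(P * w) / (w * (1 - w)) = P / (1 - w)" using w by simp
    also have "P / (1 - w) \<ge> l1 * (1 - (Y + w)) / (1 - w)"
      using PP ut1 unfolding w_def by (intro divide_right_mono) auto
    finally have A: "(P * w + c * Y) / (w * (1 - w)) \<ge> l1 - l1 * (Y / (1 - w))"
      using ut1 unfolding w_def by (simp add: field_simps)
    have "Y / (1 - w) \<le> Y * k / (k - 1)"
    proof -
      have "1 / (1 - w) \<le> k / (k - 1)" using w k ut1 unfolding w_def by (simp add: field_simps)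
      hence "Y * (1 / (1 - w)) \<le> Y * (k / (k - 1))" using Y by (intro mult_left_mono) auto
      thus ?thesis by simp
    qed
    hence "l1 * (Y / (1 - w)) \<le> l1 * (Y * k / (k - 1))" using l1 by (intro mult_left_mono) auto
    also have "l1 * (Y * k / (k - 1)) = - B * (exp (l0 * t) * l0)"
      unfolding B_def Y(2) using k l0 by (simp add: field_simps)
    finally show "0 \<le> up t / u t - (- up t) / (1 - u t) - l1 - B * (exp (l0 * t) * l0)"
      using A eq by linarith
  qed
  have GT: "G (u T) < - ln (k - 1)"
  proof -
    have uT: "0 < u T" "u T < 1/k" using pos lt T by auto
    have k1: "1/k < 1" using k by simp
    have "ln (u T) < ln (1/k)" by (rule ln_less_cancel_iff[THEN iffD2]) (use uT k in auto)
    moreover have "ln (1 - 1/k) < ln (1 - u T)" by (rule ln_less_cancel_iff[THEN iffD2]) (use uT k1 in auto)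
    moreover have "ln (1/k) - ln (1 - 1/k) = - ln (k - 1)"
    proof -
      have "1 - 1/k = (k-1)/k" using k by (simp add: field_simps)
      thus ?thesis using k by (simp add: ln_div)
    qed
    ultimately show ?thesis unfolding G_def by linarith
  qed
  have Gs: "G (u T) \<ge> ln (u s) + l1 * (T - s) - B" if s: "0 \<le> s" "s \<le> T" for s
  proof -
    have us: "0 < u s" "u s < 1/k" using pos lt s by auto
    hence "u s < 1" using k by (smt (verit) divide_less_eq_1_pos)
    hence "ln (1 - u s) \<le> 0" using us by simp
    hence "G (u s) \<ge> ln (u s)" unfolding G_def by simp
    moreover have "exp (l0 * s) \<le> 1" using l0 s by (simp add: mult_nonpos_nonneg)
    moreover have "B * exp (l0 * s) \<le> B" using Bpos \<open>exp (l0 * s) \<le> 1\<close> by simp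
    moreover have "B * exp (l0 * T) \<ge> 0" using Bpos by simp
    ultimately show ?thesis using Hmono[OF s] unfolding H_def by (simp add: algebra_simps)
  qed
  from cond show False
  proof
    assume C1: "l1 * T > - ln (k - 1) - ln u0 + l1 / ((k - 1) * (- l0))"
    have "G (u T) \<ge> ln u0 + l1 * T - B" using Gs[of 0] T ui by simp
    thus False using C1 GT unfolding B_def by linarith
  next
    assume C2: "T \<ge> 1 \<and> l1 * T > - ln (k - 1) - ln (c * (exp l0 * (1 - exp (- l1)) / (k * l1))) + l1
              + l1 / ((k - 1) * (- l0))"
    hence T1: "1 \<le> T" by simp
    define K where "K = (\<lambda>t. u t * exp (l1 * t) - c * exp l0 / (k * l1) * exp (l1 * t))"
    have "K 0 \<le> K 1"
    proof (rule mono_helper[of 0 1 K "\<lambda>t. up t * exp (l1 * t) + u t * (exp (l1 * t) * l1) - c * exp l0 / (k * l1) * (exp (l1 * t) * l1)"])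
      fix t :: real assume t: "0 \<le> t" "t \<le> 1"
      have du: "(u has_real_derivative up t) (at t within {0..})" using der t unfolding up_def by auto
      show "(K has_real_derivative up t * exp (l1 * t) + u t * (exp (l1 * t) * l1) - c * exp l0 / (k * l1) * (exp (l1 * t) * l1)) (at t within {0..})"
        unfolding K_def
        by (intro derivative_eq_intros) (auto intro: du)
    next
      fix t :: real assume t: "0 < t" "t < 1"
      have t0: "t \<ge> 0" "t \<le> T" using t T1 by auto
      have ut: "0 < u t" "u t < 1/k" using pos lt t0 by auto
      have ut1: "u t < 1" using ut k by (smt (verit) divide_less_eq_1_pos)
      have yt: "y t \<le> 1/k" using ylt t0 by auto
      have k1: "1/k < 1" using k by simp
      have "p t \<ge> l1 * (1 - (y t + u t))" using pl t0 ut by auto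
      moreover have "l1 * (1 - (y t + u t)) \<ge> l1 * (- 1)" using l1 yt ut1 k1
        by (intro mult_left_mono) auto
      ultimately have "p t \<ge> - l1" by linarith
      hence pu: "p t * u t \<ge> - l1 * u t" using ut by (intro mult_right_mono) auto
      have "exp l0 \<le> exp (l0 * t)" using l0 t by (simp add: mult_le_cancel_left1)
      hence "exp l0 / k \<le> y t" using y t0 k by (simp add: divide_right_mono)
      hence cy: "c * exp l0 / k \<le> c * y t" using c mult_left_mono[of "exp l0 / k" "y t" c] by simp
      have "up t + u t * l1 - c * exp l0 / k \<ge> 0" unfolding up_def using pu cy by (simp add: algebra_simps)
      hence "(up t + u t * l1 - c * exp l0 / k) * exp (l1 * t) \<ge> 0" by simp
      moreover have "(up t + u t * l1 - c * exp l0 / k) * exp (l1 * t) =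
          up t * exp (l1 * t) + u t * (exp (l1 * t) * l1) - c * exp l0 / (k * l1) * (exp (l1 * t) * l1)"
        using l1 by (simp add: field_simps)
      ultimately show "0 \<le> up t * exp (l1 * t) + u t * (exp (l1 * t) * l1) - c * exp l0 / (k * l1) * (exp (l1 * t) * l1)"
        by simp
    qed auto
    hence "u0 - c * exp l0 / (k * l1) \<le> u 1 * exp l1 - c * exp l0 / (k * l1) * exp l1"
      unfolding K_def using ui by simp
    moreover have "c * exp l0 / (k * l1) * (exp l1 - 1) = c * exp l0 / (k * l1) * exp l1 - c * exp l0 / (k * l1)"
      by (simp add: right_diff_distrib)
    ultimately have "c * exp l0 / (k * l1) * (exp l1 - 1) \<le> u 1 * exp l1" using u0pos by linarith
    hence "c * exp l0 / (k * l1) * (exp l1 - 1) / exp l1 \<le> u 1" by (subst pos_divide_le_eq) auto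
    moreover have "c * exp l0 / (k * l1) * (exp l1 - 1) / exp l1 = c * D"
      unfolding D_def by (simp add: field_simps exp_minus)
    ultimately have u1: "c * D \<le> u 1" by simp
    have Dpos: "D > 0" unfolding D_def using l1 k by simp
    have "ln (c * D) \<le> ln (u 1)" by (rule ln_le_cancel_iff[THEN iffD2]) (use u1 mult_pos_pos[OF c Dpos] in auto)
    moreover have "G (u T) \<ge> ln (u 1) + l1 * (T - 1) - B" using Gs[of 1] T1 by simp
    ultimately show False using C2 GT unfolding B_def D_def by (simp add: algebra_simps)
  qed
qed

theorem lemmaA1:
  fixes r0 d0 d1 k \<alpha> \<beta> :: real
    and f :: "real \<Rightarrow> real \<Rightarrow> real"
    and y0 y1 yb :: "nat \<Rightarrow> real \<Rightarrow> real"
  assumes r0: "r0 \<ge> 0" and d0: "d0 \<ge> 0" and lam0: "r0 - d0 < 0"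
    and d1: "d1 > 0" and k: "k > 1"
    and alpha: "0 < \<alpha>" "\<alpha> < 1" and beta: "0 < \<beta>" "\<beta> < 1"
    and f_nonneg: "\<And>x y. x \<ge> 0 \<Longrightarrow> y \<ge> 0 \<Longrightarrow> f x y \<ge> 0"
    and A1: "\<exists>L. L-lipschitz_on {p :: real \<times> real. fst p \<ge> 0 \<and> snd p \<ge> 0} (\<lambda>p. f (fst p) (snd p))"
    and A2a: "\<And>x y. x \<ge> 0 \<Longrightarrow> y \<ge> 0 \<Longrightarrow> x + y = 0 \<Longrightarrow> f x y = f 0 0"
    and A2b: "\<And>x y. x \<ge> 0 \<Longrightarrow> y \<ge> 0 \<Longrightarrow> x + y = 1 \<Longrightarrow> f x y = d1"
    and A2c: "f 0 0 > d1"
    and A3: "\<exists>\<Phi> :: real \<Rightarrow> real. (\<forall>s\<ge>0. \<Phi> s \<ge> 0)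
               \<and> (\<forall>s t. 0 \<le> s \<longrightarrow> s \<le> t \<longrightarrow> \<Phi> t \<le> \<Phi> s)
               \<and> (\<forall>x y. x \<ge> 0 \<longrightarrow> y \<ge> 0 \<longrightarrow> f x y = \<Phi> (x + y))"
    and A4x: "\<And>y. y \<ge> 0 \<Longrightarrow> ((\<lambda>x. f x y) \<longlongrightarrow> 0) at_top"
    and A4y: "\<And>x. x \<ge> 0 \<Longrightarrow> ((\<lambda>y. f x y) \<longlongrightarrow> 0) at_top"
    and A5: "\<And>x y. x \<ge> 0 \<Longrightarrow> y \<ge> 0 \<Longrightarrow> f x y \<ge> (f 0 0 - d1) * (1 - (x + y)) + d1"
    and ode0: "\<And>n t. n \<ge> 1 \<Longrightarrow> t \<ge> 0 \<Longrightarrow>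
               (y0 n has_real_derivative (r0 - d0) * y0 n t) (at t within {0..})"
    and ode1: "\<And>n t. n \<ge> 1 \<Longrightarrow> t \<ge> 0 \<Longrightarrow>
               (y1 n has_real_derivative
                  (f (y0 n t) (y1 n t) - d1) * y1 n t + real n powr (-\<alpha>) * y0 n t) (at t within {0..})"
    and odeb: "\<And>n t. n \<ge> 1 \<Longrightarrow> t \<ge> 0 \<Longrightarrow>
               (yb n has_real_derivative (f (y0 n t) (y1 n t) - d1) * yb n t) (at t within {0..})"
    and init0: "\<And>n. n \<ge> 1 \<Longrightarrow> y0 n 0 = real n / (k * real n)"
    and init1: "\<And>n. n \<ge> 1 \<Longrightarrow> y1 n 0 = real n powr \<beta> / (k * real n)"
    and initb: "\<And>n. n \<ge> 1 \<Longrightarrow> yb n 0 = real n powr \<beta> / (k * real n)"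
  shows "\<exists>C > 0. \<forall>\<^sub>F n in sequentially.
           {t. t > 0 \<and> y1 n t = real n / (k * real n)} \<noteq> {} \<and>
           recurrence_time (y1 n) (real n / (k * real n))
             < C + min (1 - \<beta>) \<alpha> / (f 0 0 - d1) * ln (real n)"

proof -
  define l0 where "l0 = r0 - d0"
  define l1 where "l1 = f 0 0 - d1"
  define B where "B = l1 / ((k - 1) * (- l0))"
  define D where "D = exp l0 * (1 - exp (- l1)) / (k * l1)"
  define m where "m = min (1 - \<beta>) \<alpha>"
  define C0 where "C0 = (\<bar>ln (k - 1)\<bar> + ln k + B + \<bar>ln D\<bar> + l1 + 1) / l1 + 1"
  have l0: "l0 < 0" using lam0 unfolding l0_def by simp
  have l1: "l1 > 0" using A2c unfolding l1_def by simp
  have lnk: "ln k > 0" using k by simp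
  have Bpos: "B > 0" unfolding B_def using l0 l1 k by (intro divide_pos_pos) (auto simp: mult_pos_neg)
  have C0: "C0 \<ge> 1" unfolding C0_def using l1 lnk Bpos by (simp add: divide_nonneg_pos)
  have l1C0: "l1 * C0 = \<bar>ln (k - 1)\<bar> + ln k + B + \<bar>ln D\<bar> + l1 + 1 + l1"
    unfolding C0_def using l1 by (simp add: field_simps)
  have ev: "\<forall>\<^sub>F n in sequentially. (2::nat) \<le> n" by (rule eventually_ge_at_top)
  show ?thesis
  proof (rule exI[of _ "C0 + 1"], intro conjI)
    show "C0 + 1 > 0" using C0 by simp
    show "\<forall>\<^sub>F n in sequentially.
           {t. t > 0 \<and> y1 n t = real n / (k * real n)} \<noteq> {} \<and>
           recurrence_time (y1 n) (real n / (k * real n))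
             < C0 + 1 + min (1 - \<beta>) \<alpha> / (f 0 0 - d1) * ln (real n)"
      using ev
    proof eventually_elim
      case (elim n)
      have n1: "n \<ge> 1" and nr: "real n \<ge> 2" using elim by auto
      have nk: "real n / (k * real n) = 1 / k" using nr by simp
      have lnn: "ln (real n) > 0" using nr by simp
      define u0 where "u0 = real n powr \<beta> / (k * real n)"
      define c where "c = real n powr (- \<alpha>)"
      define T where "T = m / l1 * ln (real n) + C0"
      have c: "c > 0" unfolding c_def using nr by simp
      have u0pos: "u0 > 0" unfolding u0_def using nr k by simp
      have "real n powr \<beta> < real n powr 1" using nr beta by (intro powr_less_mono) auto
      hence "real n powr \<beta> < real n" using nr by simp
      hence u0lt: "u0 < 1 / k" unfolding u0_def using nr k by (simp add: field_simps)
      have lnu0: "ln u0 = (\<beta> - 1) * ln (real n) - ln k"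
        unfolding u0_def using nr k by (simp add: ln_div ln_mult ln_powr algebra_simps)
      have lnc: "ln c = - \<alpha> * ln (real n)" unfolding c_def using nr by (simp add: ln_powr)
      have yexp: "y0 n t = exp (l0 * t) / k" if "t \<ge> 0" for t
      proof -
        have "y0 n t = y0 n 0 * exp (l0 * t)"
          by (rule y0_explicit[of "y0 n" l0 t]) (use ode0 n1 that in \<open>auto simp: l0_def\<close>)
        thus ?thesis using init0[OF n1] nk by simp
      qed
      have T0: "T \<ge> 0" unfolding T_def using C0 l1 lnn alpha beta unfolding m_def
        by (intro add_nonneg_nonneg mult_nonneg_nonneg divide_nonneg_pos) auto
      have mln: "m * ln (real n) \<ge> 0" unfolding m_def using lnn alpha beta by simp
      have l1T: "l1 * T = m * ln (real n) + l1 * C0" unfolding T_def using l1 by (simp add: field_simps)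
      have cond: "l1 * T > - ln (k - 1) - ln u0 + l1 / ((k - 1) * (- l0))
        \<or> (T \<ge> 1 \<and> l1 * T > - ln (k - 1) - ln (c * (exp l0 * (1 - exp (- l1)) / (k * l1))) + l1
              + l1 / ((k - 1) * (- l0)))"
      proof (cases "1 - \<beta> \<le> \<alpha>")
        case True
        hence "m = 1 - \<beta>" unfolding m_def by simp
        hence "l1 * T = (1 - \<beta>) * ln (real n) + l1 * C0" using l1T by simp
        moreover have "(1 - \<beta>) * ln (real n) = - ((\<beta> - 1) * ln (real n))" by (simp add: algebra_simps)
        moreover have "\<bar>ln (k - 1)\<bar> \<ge> - ln (k - 1)" "\<bar>ln D\<bar> \<ge> 0" by auto
        moreover have "B = l1 / ((k - 1) * (- l0))" by (rule B_def)
        ultimately show ?thesis using lnu0 l1C0 l1 by (intro disjI1) linarith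
      next
        case False
        hence "m = \<alpha>" unfolding m_def by simp
        hence e: "l1 * T = \<alpha> * ln (real n) + l1 * C0" using l1T by simp
        have Dp: "D > 0" unfolding D_def using l1 k by simp
        have "ln (c * D) = - \<alpha> * ln (real n) + ln D" using c Dp lnc by (simp add: ln_mult)
        moreover have "m / l1 * ln (real n) \<ge> 0" using mln l1 by simp
        hence "T \<ge> 1" unfolding T_def using C0 by linarith
        moreover have "\<bar>ln (k - 1)\<bar> \<ge> - ln (k - 1)" "\<bar>ln D\<bar> \<ge> - ln D" "ln k > 0" using lnk by auto
        moreover have "B = l1 / ((k - 1) * (- l0))" by (rule B_def)
        moreover have "D = exp l0 * (1 - exp (- l1)) / (k * l1)" by (rule D_def)
        ultimately show ?thesis using e l1C0 l1 by (intro disjI2) auto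
      qed
      have hy: "\<And>t. t \<ge> 0 \<Longrightarrow> y0 n t = exp (l0 * t) / k" using yexp by auto
      have hi: "y1 n 0 = u0" using init1[OF n1] unfolding u0_def by simp
      have hd: "\<And>t. t \<ge> 0 \<Longrightarrow> (y1 n has_real_derivative (f (y0 n t) (y1 n t) - d1) * y1 n t + c * y0 n t) (at t within {0..})"
        using ode1 n1 unfolding c_def by auto
      have hp: "f (y0 n t) (y1 n t) - d1 \<ge> l1 * (1 - (y0 n t + y1 n t))" if "t \<ge> 0" "y1 n t \<ge> 0" for t
      proof -
        have "y0 n t \<ge> 0" using yexp[OF \<open>t \<ge> 0\<close>] k by simp
        thus ?thesis using A5[of "y0 n t" "y1 n t"] that unfolding l1_def by simp
      qed
      obtain t where t: "0 < t" "t \<le> T" "y1 n t = 1/k"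
        using core[of l0 l1 k c u0 "y0 n" "y1 n" "\<lambda>t. f (y0 n t) (y1 n t) - d1" T, OF l0 l1 k c u0pos u0lt hy hi hd hp T0 cond]
        by blast
      have mem: "t \<in> {t. t > 0 \<and> y1 n t = real n / (k * real n)}" using t nk by simp
      have "recurrence_time (y1 n) (real n / (k * real n)) \<le> t"
        unfolding recurrence_time_def
        by (rule cInf_lower[OF mem]) (rule bdd_belowI[of _ 0], auto)
      moreover have "T < C0 + 1 + min (1 - \<beta>) \<alpha> / (f 0 0 - d1) * ln (real n)"
        unfolding T_def m_def l1_def by simp
      ultimately show ?case using mem t by auto
    qed
  qed
qed

end
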